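(* Let $\mathcal X$ be a Polish space with Borel probability measure $\rho$, $a<b$ reals, $T\ge1$, and $\mathcal C\subseteq[a,b]^T$ nonempty compact. Let $\ell:[a,b]\times[a,b]\to\mathbb R$ be SELF with $\ell(y,y')=\langle\psi(y),V\psi(y')\rangle_{\mathcal H}$ and continuous. Let $g_1,\dots,g_T:\mathcal X\to\mathcal H$ be measurable with $\|g_t(x)\|_{\mathcal H}$ bounded almost everywhere, and set $$r(x,c)=\frac1T\sum_{t=1}^T\langle\psi(c_t),Vg_t(x)\rangle_{\mathcal H},\qquad\bar{\mathcal E}(f)=\int_{\mathcal X}r(x,f(x))\,d\rho(x).$$ Then there exist a measurable $f^\circ:\mathcal X\to\mathcal C$ with $f^\circ(x)\in\operatorname*{argmin}_{c\in\mathcal C}r(x,c)$ and a measurable function $m$ with $m(x)=\min_{c\in\mathcal C}r(x,c)$ almost everywhere, such that $$\bar{\mathcal E}(f^\circ)=\int_{\mathcal X}m(x)\,d\rho(x)=\inf_{f:\mathcal X\to\mathcal C}\bar{\mathcal E}(f),$$ the infimum being over measurable $f$.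
   Context: Definition (SELF): Let $\mathcal{Y}$ be a compact set. A function $\ell:\mathcal{Y}\times\mathcal{Y}\to\mathbb{R}$ is a Structure Encoding Loss Function (SELF) if there exist a continuous feature map $\psi:\mathcal{Y}\to\mathcal{H}$, with $\mathcal{H}$ a reproducing kernel Hilbert space on $\mathcal{Y}$, and a continuous linear operator $V:\mathcal{H}\to\mathcal{H}$ such that $\ell(y,y')=\langle\psi(y),V\psi(y')\rangle_{\mathcal H}$ for all $y,y'\in\mathcal{Y}$. For $c\in\mathbb R^T$, $c_t$ is its $t$-th coordinate. *)

theory Defs
  imports "HOL-Analysis.Analysis" "HOL-Probability.Probability"
begin

definition rfun :: "(real \<Rightarrow> 'h::real_inner) \<Rightarrow> ('h \<Rightarrow> 'h) \<Rightarrow> ('t::finite \<Rightarrow> 'a \<Rightarrow> 'h)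
    \<Rightarrow> 'a \<Rightarrow> real^'t \<Rightarrow> real" where
  "rfun \<psi> V g x c = (1 / real CARD('t)) * (\<Sum>t\<in>UNIV. inner (\<psi> (c $ t)) (V (g t x)))"

definition Ebar :: "'a measure \<Rightarrow> (real \<Rightarrow> 'h::real_inner) \<Rightarrow> ('h \<Rightarrow> 'h) \<Rightarrow> ('t::finite \<Rightarrow> 'a \<Rightarrow> 'h)
    \<Rightarrow> ('a \<Rightarrow> real^'t) \<Rightarrow> real" where
  "Ebar \<rho> \<psi> V g f = (\<integral>x. rfun \<psi> V g x (f x) \<partial>\<rho>)"

end

theory Submission
  imports Defs
begin

lemma INF_meas:
  fixes h :: "'a \<Rightarrow> 'b::{metric_space, second_countable_topology} \<Rightarrow> real"
  assumes S: "compact S" "S \<noteq> {}" and cont: "\<And>x. continuous_on S (h x)"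
    and meas: "\<And>c. c \<in> S \<Longrightarrow> (\<lambda>x. h x c) \<in> borel_measurable M"
  shows "(\<lambda>x. INF c\<in>S. h x c) \<in> borel_measurable M"
proof -
  obtain D where D: "countable D" "D \<subseteq> S" "S \<subseteq> closure D" using separable by blast
  have Dne: "D \<noteq> {}" using D S by auto
  have eq: "(INF c\<in>S. h x c) = (INF c\<in>D. h x c)" for x
  proof -
    have bdd: "bdd_below (h x ` S)"
      by (intro bounded_imp_bdd_below compact_imp_bounded compact_continuous_image cont S(1))
    have "(INF c\<in>S. h x c) \<le> (INF c\<in>D. h x c)"
      by (rule cINF_superset_mono[OF Dne bdd D(2)]) simp
    moreover have "(INF c\<in>D. h x c) \<le> h x c" if c: "c \<in> S" for c
    proof -
      from c D have "c \<in> closure D" by auto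
      then obtain s where s: "\<And>n. s n \<in> D" "s \<longlonglongrightarrow> c" by (meson closure_sequential)
      have "(\<lambda>n. h x (s n)) \<longlonglongrightarrow> h x c"
        by (rule continuous_on_tendsto_compose[OF cont s(2) c]) (rule always_eventually, use s(1) D(2) in blast)
      moreover have "(INF c\<in>D. h x c) \<le> h x (s n)" for n
        by (rule cINF_lower[OF bdd_below_mono[OF bdd image_mono[OF D(2)]] s(1)])
      ultimately show ?thesis by (meson LIMSEQ_le_const)
    qed
    hence "(INF c\<in>D. h x c) \<le> (INF c\<in>S. h x c)"
      using S(2) by (intro cINF_greatest) auto
    ultimately show ?thesis by linarith
  qed
  show ?thesis unfolding eq
    using D meas by (intro borel_measurable_cINF_real) auto
qed

lemma argmin_select:
  fixes h :: "'a \<Rightarrow> real^'t::finite \<Rightarrow> real"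
  assumes Cc: "compact C" and Cne: "C \<noteq> {}" and cont: "\<And>x. continuous_on C (h x)"
    and meas: "\<And>c. c \<in> C \<Longrightarrow> (\<lambda>x. h x c) \<in> borel_measurable M"
  shows "\<exists>f. f \<in> borel_measurable M \<and> (\<forall>x. f x \<in> C) \<and> (\<forall>x. \<forall>c\<in>C. h x (f x) \<le> h x c)"
proof -
  define phi where "phi x = (INF c\<in>C. h x c)" for x
  have phim[measurable]: "phi \<in> borel_measurable M"
    unfolding phi_def[abs_def] by (rule INF_meas[OF Cc Cne cont meas])
  have bddC: "bdd_below (h x ` C)" for x
    by (intro bounded_imp_bdd_below compact_imp_bounded compact_continuous_image cont Cc)
  have phi_le: "c \<in> C \<Longrightarrow> phi x \<le> h x c" for c x
    unfolding phi_def by (rule cINF_lower[OF bddC])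
  have att: "\<exists>c\<in>C. h x c = phi x" for x
  proof -
    obtain c where c: "c \<in> C" "\<And>c'. c' \<in> C \<Longrightarrow> h x c \<le> h x c'"
      using continuous_attains_inf[OF Cc Cne cont] by blast
    have "h x c \<le> phi x" unfolding phi_def using Cne c by (intro cINF_greatest) auto
    moreover have "phi x \<le> h x c" by (rule phi_le[OF c(1)])
    ultimately show ?thesis using c(1) by (intro bexI[of _ c]) auto
  qed
  obtain D where D: "countable D" "D \<subseteq> C" "C \<subseteq> closure D" using separable by blast
  have Dne: "D \<noteq> {}" using D Cne by auto
  define d where "d = from_nat_into D"
  have dC: "d n \<in> C" for n using from_nat_into[OF Dne] D(2) unfolding d_def by blast
  have dense: "\<exists>n. dist (d n) c < e" if cin: "c \<in> C" and epos: "e > 0" for c e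
  proof -
    from cin D(3) have "c \<in> closure D" by auto
    then obtain y where "y \<in> D" "dist y c < e" using closure_approachable epos by blast
    moreover have "y \<in> range d" using \<open>y \<in> D\<close> D(1) Dne unfolding d_def by simp
    ultimately show ?thesis by auto
  qed
  define rad :: "nat \<Rightarrow> real" where "rad k = (1/2)^k" for k
  have rad_pos: "rad k > 0" for k unfolding rad_def by simp
  define E where "E n k x \<longleftrightarrow> (\<exists>c\<in>C. dist (d n) c \<le> rad k \<and> h x c = phi x)" for n k x
  have Em[measurable]: "Measurable.pred M (E n k)" for n k
  proof -
    define S where "S = C \<inter> cball (d n) (rad k)"
    have S: "compact S" "S \<noteq> {}" "S \<subseteq> C"
      unfolding S_def using Cc dC[of n] rad_pos[of k] by (auto intro!: compact_Int_closed)
    have Sm[measurable]: "(\<lambda>x. INF c\<in>S. h x c) \<in> borel_measurable M"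
      by (rule INF_meas[OF S(1,2)]) (use S(3) cont meas in \<open>auto intro: continuous_on_subset\<close>)
    have bddS: "bdd_below (h x ` S)" for x by (rule bdd_below_mono[OF bddC image_mono[OF S(3)]])
    have eq: "E n k x \<longleftrightarrow> (INF c\<in>S. h x c) \<le> phi x" for x
    proof
      assume "E n k x"
      then obtain c where "c \<in> C" "dist (d n) c \<le> rad k" "h x c = phi x" unfolding E_def by blast
      hence "c \<in> S" unfolding S_def by auto
      from cINF_lower[OF bddS[of x] this] \<open>h x c = phi x\<close> show "(INF c\<in>S. h x c) \<le> phi x" by simp
    next
      assume le: "(INF c\<in>S. h x c) \<le> phi x"
      obtain c where c: "c \<in> S" "\<And>c'. c' \<in> S \<Longrightarrow> h x c \<le> h x c'"
        using continuous_attains_inf[OF S(1,2) continuous_on_subset[OF cont S(3)]] by blast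
      have "h x c \<le> (INF c\<in>S. h x c)" using S(2) c by (intro cINF_greatest) auto
      with le phi_le[of c x] c(1) S(3) have "h x c = phi x" by force
      with c(1) show "E n k x" unfolding E_def S_def by (auto simp: dist_commute)
    qed
    have "Measurable.pred M (\<lambda>x. (INF c\<in>S. h x c) \<le> phi x)" by measurable
    moreover have "E n k = (\<lambda>x. (INF c\<in>S. h x c) \<le> phi x)" using eq by blast
    ultimately show ?thesis by simp
  qed
  define Q where "Q k n p x \<longleftrightarrow> dist (d n) p \<le> rad k + rad (Suc k) \<and> E n (Suc k) x" for k n p x
  define p where "p = rec_nat (\<lambda>x. d (LEAST n. E n 0 x)) (\<lambda>k q x. d (LEAST n. Q k n (q x) x))"
  have p0: "p 0 = (\<lambda>x. d (LEAST n. E n 0 x))" and pS: "p (Suc k) = (\<lambda>x. d (LEAST n. Q k n (p k x) x))" for k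
    by (simp_all add: p_def)
  have step: "\<exists>n. Q k n q x" if "\<exists>c\<in>C. dist q c \<le> rad k \<and> h x c = phi x" for k q x
  proof -
    from that obtain c where c: "c \<in> C" "dist q c \<le> rad k" "h x c = phi x" by blast
    obtain n where n: "dist (d n) c < rad (Suc k)" using dense[OF c(1) rad_pos] by blast
    have "dist (d n) q \<le> dist (d n) c + dist q c" by (metis dist_commute dist_triangle)
    hence "dist (d n) q \<le> rad k + rad (Suc k)" using n c(2) by linarith
    moreover have "E n (Suc k) x" unfolding E_def using c n by (auto intro!: bexI[of _ c])
    ultimately show ?thesis unfolding Q_def by blast
  qed
  have inv: "\<exists>c\<in>C. dist (p k x) c \<le> rad k \<and> h x c = phi x" for k x
  proof (induction k)
    case 0
    obtain c where c: "c \<in> C" "h x c = phi x" using att by blast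
    obtain n where "dist (d n) c < rad 0" using dense[OF c(1) rad_pos] by blast
    hence "E n 0 x" unfolding E_def using c by (auto intro!: bexI[of _ c])
    hence "E (LEAST n. E n 0 x) 0 x" by (rule LeastI)
    thus ?case unfolding p0 E_def by simp
  next
    case (Suc k)
    from LeastI_ex[OF step[OF Suc]] show ?case unfolding pS Q_def E_def by simp
  qed
  have pstep: "dist (p k x) (p (Suc k) x) \<le> rad k + rad (Suc k)" for k x
    using LeastI_ex[OF step[OF inv[of k x]]] unfolding pS Q_def by (simp add: dist_commute)
  have pm[measurable]: "p k \<in> borel_measurable M" for k
  proof (induction k)
    case 0
    have "(\<lambda>x. LEAST n. E n 0 x) \<in> measurable M (count_space UNIV)" by measurable
    thus ?case unfolding p0 by (rule measurable_compose) simp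
  next
    case (Suc k)
    note Suc[measurable]
    have "(\<lambda>x. LEAST n. Q k n (p k x) x) \<in> measurable M (count_space UNIV)"
      unfolding Q_def by measurable
    thus ?case unfolding pS by (rule measurable_compose) simp
  qed
  define u where "u j x = p (Suc j) x - p j x" for j x
  have un: "norm (u j x) \<le> 2 * (1/2)^j" for j x
  proof -
    have "norm (u j x) \<le> rad j + rad (Suc j)"
      using pstep[of j x] unfolding u_def by (simp add: dist_norm norm_minus_commute)
    moreover have "rad (Suc j) \<le> rad j" "rad j = (1/2)^j" unfolding rad_def by simp_all
    ultimately show ?thesis by linarith
  qed
  have sm: "summable (\<lambda>j. u j x)" for x
    by (rule summable_norm_cancel, rule summable_comparison_test[OF _ summable_mult[OF summable_geometric]])
       (use un in auto)
  define f where "f x = p 0 x + (\<Sum>j. u j x)" for x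
  have lim: "(\<lambda>k. p k x) \<longlonglongrightarrow> f x" for x
  proof -
    have eq: "(\<lambda>k. p k x) = (\<lambda>k. p 0 x + (\<Sum>j<k. u j x))"
    proof
      fix k show "p k x = p 0 x + (\<Sum>j<k. u j x)"
        unfolding u_def using sum_lessThan_telescope[of "\<lambda>j. p j x" k] by simp
    qed
    have "(\<lambda>k. p 0 x + (\<Sum>j<k. u j x)) \<longlonglongrightarrow> f x"
      unfolding f_def by (intro tendsto_add tendsto_const summable_LIMSEQ sm)
    thus ?thesis by (simp only: eq)
  qed
  have fm: "f \<in> borel_measurable M"
    by (rule borel_measurable_LIMSEQ_metric[OF pm lim])
  have fmin: "f x \<in> C \<and> h x (f x) = phi x" for x
  proof -
    obtain cs where cs: "\<And>k. cs k \<in> C" "\<And>k. dist (p k x) (cs k) \<le> rad k" "\<And>k. h x (cs k) = phi x"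
      using inv[of _ x] by metis
    have "(\<lambda>k. cs k - p k x) \<longlonglongrightarrow> 0"
    proof (rule Lim_null_comparison)
      show "\<forall>\<^sub>F k in sequentially. norm (cs k - p k x) \<le> rad k"
        using cs(2) by (auto simp: dist_norm norm_minus_commute)
      show "rad \<longlonglongrightarrow> 0" unfolding rad_def[abs_def] by (rule LIMSEQ_power_zero) simp
    qed
    from tendsto_add[OF lim[of x] this] have cl: "cs \<longlonglongrightarrow> f x" by simp
    have fC: "f x \<in> C" using closed_sequentially[OF compact_imp_closed[OF Cc]] cs(1) cl by blast
    have "(\<lambda>k. h x (cs k)) \<longlonglongrightarrow> h x (f x)"
      by (rule continuous_on_tendsto_compose[OF cont cl fC]) (simp add: cs(1))
    hence "(\<lambda>k. phi x) \<longlonglongrightarrow> h x (f x)" using cs(3) by simp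
    hence "phi x = h x (f x)" using LIMSEQ_unique tendsto_const by blast
    with fC show ?thesis by simp
  qed
  show ?thesis using fm fmin phi_le by (intro exI[of _ f]) auto
qed

theorem lemma3:
  fixes \<rho> :: "'a::polish_space measure"
    and a b :: real
    and C :: "(real^'t::finite) set"
    and loss :: "real \<Rightarrow> real \<Rightarrow> real"
    and \<psi> :: "real \<Rightarrow> 'h::{real_inner, complete_space, second_countable_topology}"
    and V :: "'h \<Rightarrow> 'h"
    and g :: "'t \<Rightarrow> 'a \<Rightarrow> 'h"
  assumes prob: "prob_space \<rho>"
    and borel: "sets \<rho> = sets borel"
    and ab: "a < b"
    and C_ne: "C \<noteq> {}"
    and C_compact: "compact C"
    and C_sub: "\<forall>c\<in>C. \<forall>t. c $ t \<in> {a..b}"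
    and psi_cont: "continuous_on {a..b} \<psi>"
    and V_lin: "bounded_linear V"
    and SELF: "\<forall>y\<in>{a..b}. \<forall>y'\<in>{a..b}. loss y y' = inner (\<psi> y) (V (\<psi> y'))"
    and ell_cont: "continuous_on ({a..b} \<times> {a..b}) (\<lambda>(y, y'). loss y y')"
    and g_meas: "\<forall>t. g t \<in> borel_measurable \<rho>"
    and g_bdd: "\<forall>t. \<exists>B. AE x in \<rho>. norm (g t x) \<le> B"
  shows "\<exists>f0 m.
     f0 \<in> borel_measurable \<rho> \<and> (\<forall>x. f0 x \<in> C) \<and>
     (\<forall>x. \<forall>c\<in>C. rfun \<psi> V g x (f0 x) \<le> rfun \<psi> V g x c) \<and>
     m \<in> borel_measurable \<rho> \<and>
     (AE x in \<rho>. m x = (INF c\<in>C. rfun \<psi> V g x c)) \<and>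
     Ebar \<rho> \<psi> V g f0 = (\<integral>x. m x \<partial>\<rho>) \<and>
     (\<integral>x. m x \<partial>\<rho>) = (INF f\<in>{f. f \<in> borel_measurable \<rho> \<and> (\<forall>x. f x \<in> C)}. Ebar \<rho> \<psi> V g f)"
proof -
  interpret P: prob_space \<rho> by (rule prob)
  define r where "r = rfun \<psi> V g"
  define \<psi>c where "\<psi>c = (\<lambda>y. \<psi> (max a (min b y)))"
  have \<psi>c_cont: "continuous_on UNIV \<psi>c"
    unfolding \<psi>c_def by (rule continuous_on_compose2[OF psi_cont]) (auto intro!: continuous_intros simp: ab less_imp_le)
  have \<psi>c_eq: "y \<in> {a..b} \<Longrightarrow> \<psi>c y = \<psi> y" for y by (simp add: \<psi>c_def)
  have r_c: "(\<forall>t. c $ t \<in> {a..b}) \<Longrightarrow> r x c = rfun \<psi>c V g x c" for x c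
    unfolding r_def rfun_def using \<psi>c_eq by simp
  have Vm[measurable]: "V \<in> borel_measurable borel"
    by (intro borel_measurable_continuous_onI linear_continuous_on V_lin)
  have \<psi>cm[measurable]: "\<psi>c \<in> borel_measurable borel"
    by (intro borel_measurable_continuous_onI \<psi>c_cont)
  have gm[measurable]: "g t \<in> borel_measurable \<rho>" for t using g_meas by simp
  have nthm: "(\<lambda>v::real^'t. v $ t) \<in> borel_measurable borel" for t
    by (rule borel_measurable_continuous_onI) (intro continuous_intros)
  have Vgm[measurable]: "(\<lambda>x. V (g t x)) \<in> borel_measurable \<rho>" for t
    by (rule measurable_compose[OF gm Vm])
  have meas_rc: "(\<lambda>x. rfun \<psi>c V g x (f x)) \<in> borel_measurable \<rho>" if fm: "f \<in> borel_measurable \<rho>" for f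
  proof -
    have [measurable]: "(\<lambda>x. f x $ t) \<in> borel_measurable \<rho>" for t
      by (rule measurable_compose[OF fm nthm])
    show ?thesis unfolding rfun_def by measurable
  qed
  have meas_f: "(\<lambda>x. r x (f x)) \<in> borel_measurable \<rho>" if "f \<in> borel_measurable \<rho>" "\<forall>x. f x \<in> C" for f
  proof -
    have "(\<lambda>x. r x (f x)) = (\<lambda>x. rfun \<psi>c V g x (f x))" using r_c C_sub that(2) by auto
    thus ?thesis using meas_rc[OF that(1)] by simp
  qed
  have meas_c: "(\<lambda>x. r x c) \<in> borel_measurable \<rho>" if "c \<in> C" for c
    using meas_f[of "\<lambda>x. c"] that by simp
  have cont: "continuous_on C (r x)" for x
  proof -
    have "continuous_on C (\<lambda>c. \<psi> (c $ t))" for t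
      by (rule continuous_on_compose2[OF psi_cont]) (use C_sub in \<open>auto intro: continuous_intros\<close>)
    thus ?thesis unfolding r_def rfun_def[abs_def] by (intro continuous_intros) auto
  qed
  obtain f0 where f0m: "f0 \<in> borel_measurable \<rho>" and f0C: "\<forall>x. f0 x \<in> C"
      and f0min: "\<forall>x. \<forall>c\<in>C. r x (f0 x) \<le> r x c"
    using argmin_select[OF C_compact C_ne cont meas_c] by blast
  define phi where "phi x = (INF c\<in>C. r x c)" for x
  have bddC: "bdd_below (r x ` C)" for x
    by (intro bounded_imp_bdd_below compact_imp_bounded compact_continuous_image cont C_compact)
  have phi_eq: "phi x = r x (f0 x)" for x
    unfolding phi_def using f0C f0min by (intro cInf_eq_minimum) auto
  have phim: "phi \<in> borel_measurable \<rho>"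
    unfolding phi_def[abs_def] by (rule INF_meas[OF C_compact C_ne cont meas_c])
  have "\<exists>Bg. \<forall>t. AE x in \<rho>. norm (g t x) \<le> Bg t" using g_bdd by metis
  then obtain Bg where Bg: "\<And>t. AE x in \<rho>. norm (g t x) \<le> Bg t" by blast
  obtain M where M: "M > 0" "\<And>y. y \<in> {a..b} \<Longrightarrow> norm (\<psi> y) \<le> M"
    using compact_imp_bounded[OF compact_continuous_image[OF psi_cont compact_Icc]]
    unfolding bounded_pos by auto
  obtain K where K: "K > 0" "\<And>u. norm (V u) \<le> norm u * K"
    using bounded_linear.pos_bounded[OF V_lin] by blast
  define B where "B = (\<Sum>t\<in>UNIV. M * K * \<bar>Bg t\<bar>)"
  have AEB: "AE x in \<rho>. \<forall>t\<in>UNIV. norm (g t x) \<le> Bg t"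
    by (rule AE_finite_allI) (use Bg in auto)
  have bnd: "\<bar>r x c\<bar> \<le> B" if x: "\<forall>t\<in>UNIV. norm (g t x) \<le> Bg t" and c: "c \<in> C" for x c
  proof -
    have Tge: "real CARD('t) \<ge> 1" by simp
    have trm: "\<bar>inner (\<psi> (c $ t)) (V (g t x))\<bar> \<le> M * K * \<bar>Bg t\<bar>" for t
    proof -
      have "\<bar>inner (\<psi> (c $ t)) (V (g t x))\<bar> \<le> norm (\<psi> (c $ t)) * norm (V (g t x))"
        by (rule Cauchy_Schwarz_ineq2)
      also have "\<dots> \<le> M * (\<bar>Bg t\<bar> * K)"
      proof (rule mult_mono)
        show "norm (\<psi> (c $ t)) \<le> M" using M(2) C_sub c by auto
        have "norm (V (g t x)) \<le> norm (g t x) * K" by (rule K(2))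
        also have "\<dots> \<le> \<bar>Bg t\<bar> * K" using x K(1) by (intro mult_right_mono) (fastforce intro: order_trans[OF _ abs_ge_self])+
        finally show "norm (V (g t x)) \<le> \<bar>Bg t\<bar> * K" .
      qed (use M(1) in auto)
      finally show ?thesis by (simp add: algebra_simps)
    qed
    have "\<bar>\<Sum>t\<in>UNIV. inner (\<psi> (c $ t)) (V (g t x))\<bar> \<le> B"
      unfolding B_def by (rule order_trans[OF sum_abs sum_mono[OF trm]])
    moreover have "B \<ge> 0" unfolding B_def using M(1) K(1) by (intro sum_nonneg) auto
    ultimately have "(1 / real CARD('t)) * \<bar>\<Sum>t\<in>UNIV. inner (\<psi> (c $ t)) (V (g t x))\<bar> \<le> 1 * B"
      using Tge by (intro mult_mono) (auto simp: field_simps)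
    thus ?thesis unfolding r_def rfun_def by (simp add: abs_mult)
  qed
  have int_f: "integrable \<rho> (\<lambda>x. r x (f x))" if "f \<in> borel_measurable \<rho>" "\<forall>x. f x \<in> C" for f
  proof (rule P.integrable_const_bound[where B=B])
    show "AE x in \<rho>. norm (r x (f x)) \<le> B" using AEB by eventually_elim (use bnd that(2) in auto)
  qed (rule meas_f[OF that])
  have Eb: "Ebar \<rho> \<psi> V g f = (\<integral>x. r x (f x) \<partial>\<rho>)" for f unfolding Ebar_def r_def by simp
  have phi_int: "(\<integral>x. phi x \<partial>\<rho>) = Ebar \<rho> \<psi> V g f0" unfolding Eb phi_eq by simp
  have lower: "(\<integral>x. phi x \<partial>\<rho>) \<le> Ebar \<rho> \<psi> V g f" if "f \<in> borel_measurable \<rho>" "\<forall>x. f x \<in> C" for f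
  proof -
    have "(\<integral>x. phi x \<partial>\<rho>) \<le> (\<integral>x. r x (f x) \<partial>\<rho>)"
      unfolding phi_eq using f0min that(2) by (intro integral_mono int_f[OF f0m f0C] int_f[OF that]) auto
    thus ?thesis unfolding Eb .
  qed
  have inf: "(\<integral>x. phi x \<partial>\<rho>) = (INF f\<in>{f. f \<in> borel_measurable \<rho> \<and> (\<forall>x. f x \<in> C)}. Ebar \<rho> \<psi> V g f)"
    by (rule cInf_eq_minimum[symmetric]) (use phi_int f0m f0C lower in auto)
  show ?thesis
    apply (rule exI[of _ f0], rule exI[of _ phi])
    using f0m f0C f0min phim phi_int inf unfolding r_def phi_def by auto
qed

end
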